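(* Assume $\mathcal N''(s)\le0$ for $s\in[0,1]$. Let $0\le c<1$ and $\Lambda\in\mathbb C$ with $\operatorname{Re}\Lambda>0$. Let $r_0$ solve $r_0'=r_0\mathcal N(r_0^2)$, $r_0(0)=\frac12$, and set $\mathcal N_0=\mathcal N(r_0^2)$, $\mathcal N_p=\mathcal N'(r_0^2)r_0^2$, $F=\mathcal N_0+\mathcal N_p$ and $f=2c\mathcal N_p$ (functions of $X\in\mathbb R$). If $V\in L^2(\mathbb R)$ satisfies $$V_{XX}=(F^2-F_X)V+\Lambda(\Lambda-f)V,$$ then $V\equiv0$.
   Context: Nonlinearity: $\mathcal N:[0,\infty)\to\mathbb R$ is smooth, $\mathcal N'(s)<0$ for $s>0$, $\mathcal N(0)=1$, $\mathcal N(1)=0$, $\lim_{s\to\infty}\mathcal N(s)\in[-\infty,0)$. The function $r_0$ increases from $0$ at $X=-\infty$ to $1$ at $X=+\infty$. *)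

theory Defs
  imports "HOL-Analysis.Analysis"
begin

end

theory Submission
  imports Defs "HOL-Analysis.Analysis"
begin

lemma abstract_right:
  fixes g g' v :: "real \<Rightarrow> real"
  assumes der: "\<And>t. (g has_real_derivative g' t) (at t)"
    and gp: "\<And>t. g' t \<ge> 0"
    and bd: "\<And>t. (g t)^2 \<le> C * v t * g' t"
    and C: "C > 0"
    and cont: "continuous_on UNIV v"
    and B: "\<And>a b. integral {a..b} v \<le> B"
    and t1: "g t1 > 0"
  shows False
proof -
  have gcont: "continuous_on S g" for S
    by (rule DERIV_continuous_on, rule has_field_derivative_at_within, rule der)
  have mono: "g a \<le> g b" if "a \<le> b" for a b
    by (rule DERIV_nonneg_imp_increasing_open[OF that]) (use der gp gcont in blast)+
  define bB where "bB = \<bar>B\<bar>"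
  have bB: "B \<le> bB" "0 \<le> bB" by (simp_all add: bB_def)
  define T where "T = t1 + bB + C / g t1 + 1"
  have gpos: "g t > 0" if "t \<ge> t1" for t using mono[OF that] t1 by linarith
  have key: "2 - C * g' t / (g t)^2 \<le> v t" if "t \<ge> t1" for t
  proof -
    have g0: "g t > 0" using gpos that .
    have h: "0 < C * v t * g' t" using bd[of t] g0 by (smt (verit) zero_less_power)
    have gp0: "g' t > 0" and v0: "v t > 0"
      using h gp[of t] C by (auto simp: zero_less_mult_iff)
    have "1 / v t \<le> C * g' t / (g t)^2"
      using bd[of t] g0 v0 gp0 C by (simp add: field_simps)
    moreover have "2 \<le> v t + 1 / v t"
    proof -
      have "0 \<le> (v t - 1)^2" by simp
      then have "2 * v t \<le> (v t)^2 + 1" by (simp add: power2_eq_square algebra_simps)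
      then show ?thesis using v0 by (simp add: field_simps power2_eq_square)
    qed
    ultimately show ?thesis by linarith
  qed
  have Cg: "C / g t1 > 0" using t1 C by simp
  have T1: "t1 \<le> T" using Cg bB unfolding T_def
    by linarith
  have fint: "((\<lambda>t. 2 - C * g' t / (g t)^2) has_integral
       ((2 * T + C / g T) - (2 * t1 + C / g t1))) {t1..T}"
  proof (rule fundamental_theorem_of_calculus[OF T1])
    fix x assume x: "x \<in> {t1..T}"
    have "g x \<noteq> 0" using gpos x by force
    then have "((\<lambda>t. 2 * t + C / g t) has_real_derivative 2 - C * g' x / (g x)^2) (at x)"
      by (auto intro!: derivative_eq_intros der simp: power2_eq_square field_simps)
    then show "((\<lambda>t. 2 * t + C / g t) has_vector_derivative 2 - C * g' x / (g x)^2) (at x within {t1..T})"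
      by (simp add: has_real_derivative_iff_has_vector_derivative has_vector_derivative_at_within)
  qed
  have "integral {t1..T} (\<lambda>t. 2 - C * g' t / (g t)^2) \<le> integral {t1..T} v"
    by (rule integral_le) (use fint key in \<open>auto intro: integrable_continuous_interval continuous_on_subset[OF cont]\<close>)
  then have "(2 * T + C / g T) - (2 * t1 + C / g t1) \<le> B"
    using B[of t1 T] integral_unique[OF fint] by linarith
  moreover have "C / g T > 0" using gpos[OF T1] C by simp
  moreover have "T \<ge> bB + C/g t1 + 1 + t1" by (simp add: T_def)
  ultimately show False using bB Cg
    by linarith
qed


lemma abstract_left:
  fixes g g' v :: "real \<Rightarrow> real"
  assumes der: "\<And>t. (g has_real_derivative g' t) (at t)"
    and gp: "\<And>t. g' t \<ge> 0"
    and bd: "\<And>t. (g t)^2 \<le> C * v t * g' t"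
    and C: "C > 0"
    and cont: "continuous_on UNIV v"
    and B: "\<And>a b. integral {a..b} v \<le> B"
    and t1: "g t1 < 0"
  shows False
proof (rule abstract_right[of "\<lambda>t. - g (- t)" "\<lambda>t. g' (- t)" C "\<lambda>t. v (- t)" B "- t1"])
  fix t
  show "((\<lambda>t. - g (- t)) has_real_derivative g' (- t)) (at t)"
    using DERIV_minus[OF iffD1[OF DERIV_mirror der[of "-t"]]] by simp
  show "0 \<le> g' (- t)" by (rule gp)
  show "(- g (- t))\<^sup>2 \<le> C * v (- t) * g' (- t)" using bd[of "-t"] by simp
next
  show "continuous_on UNIV (\<lambda>t. v (- t))"
    by (rule continuous_on_compose2[OF cont]) (auto intro!: continuous_intros)
next
  fix a b :: real
  have "integral {a..b} (\<lambda>t. v (- t)) = integral {-b..-a} v"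
    using Henstock_Kurzweil_Integration.integral_reflect_real[of "-a" "-b" v] by simp
  then show "integral {a..b} (\<lambda>t. v (- t)) \<le> B" using B by simp
qed (use C t1 in auto)

lemma L2_bound:
  fixes V :: "real \<Rightarrow> complex"
  assumes V_L2: "integrable lborel (\<lambda>X. (norm (V X))^2)"
  shows "integral {a..b} (\<lambda>X. (norm (V X))^2) \<le> integral\<^sup>L lborel (\<lambda>X. (norm (V X))^2)"
proof -
  have si: "set_integrable lborel {a..b} (\<lambda>X. (norm (V X))^2)"
    unfolding set_integrable_def by (rule integrable_mult_indicator[OF _ V_L2]) simp
  have "integral {a..b} (\<lambda>X. (norm (V X))^2) = (LINT x:{a..b}|lborel. (norm (V x))^2)"
    using set_borel_integral_eq_integral(2)[OF si] by simp
  also have "\<dots> = integral\<^sup>L lborel (\<lambda>x. indicator {a..b} x *\<^sub>R (norm (V x))^2)"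
    by (simp add: set_lebesgue_integral_def)
  also have "\<dots> \<le> integral\<^sup>L lborel (\<lambda>X. (norm (V X))^2)"
    by (rule integral_mono[OF si[unfolded set_integrable_def] V_L2]) (auto split: split_indicator)
  finally show ?thesis .
qed

lemma key_alg:
  fixes L u u1 w :: complex and Fr fr :: real
  assumes "w = u1 + of_real Fr * u"
  shows "Re (cnj L * (cnj u * (of_real Fr * w + L*(L - of_real fr)*u) + cnj u1 * w))
     = Re L * (cmod w)^2 + (cmod L)^2 * (Re L - fr) * (cmod u)^2"
  unfolding cmod_power2 assms by (simp add: algebra_simps power2_eq_square)

lemma Re_bound:
  fixes L u w :: complex
  shows "(Re (cnj L * (cnj u * w)))^2 \<le> (cmod L)^2 * (cmod u)^2 * (cmod w)^2"
proof -
  have "\<bar>Re (cnj L * (cnj u * w))\<bar> \<le> cmod L * cmod u * cmod w"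
    using abs_Re_le_cmod[of "cnj L * (cnj u * w)"] by (simp add: norm_mult mult.assoc)
  then have "\<bar>Re (cnj L * (cnj u * w))\<bar>^2 \<le> (cmod L * cmod u * cmod w)^2"
    by (rule power_mono) simp
  then show ?thesis by (simp add: power_mult_distrib)
qed

theorem lemma8p9:
  fixes Nd :: "nat \<Rightarrow> real \<Rightarrow> real"
    and r0 :: "real \<Rightarrow> real"
    and c :: real and \<Lambda> :: complex
    and V V1 V2 :: "real \<Rightarrow> complex"
  assumes smooth: "\<And>k s. s \<ge> 0 \<Longrightarrow>
             (Nd k has_real_derivative Nd (Suc k) s) (at s within {0..})"
    and N_dec: "\<And>s. s > 0 \<Longrightarrow> Nd 1 s < 0"
    and N0: "Nd 0 0 = 1" and N1: "Nd 0 1 = 0"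
    and N_inf: "(\<exists>L<0. (Nd 0 \<longlongrightarrow> L) at_top) \<or> filterlim (Nd 0) at_bot at_top"
    and N_concave: "\<And>s. s \<in> {0..1} \<Longrightarrow> Nd 2 s \<le> 0"
    and c: "0 \<le> c" "c < 1"
    and Lam: "Re \<Lambda> > 0"
    and r0_ode: "\<And>X. (r0 has_real_derivative r0 X * Nd 0 ((r0 X)^2)) (at X)"
    and r0_init: "r0 0 = 1/2"
    and V_meas: "V \<in> borel_measurable lborel"
    and V_L2: "integrable lborel (\<lambda>X. (norm (V X))^2)"
    and V_d1: "\<And>X. (V has_vector_derivative V1 X) (at X)"
    and V_d2: "\<And>X. (V1 has_vector_derivative V2 X) (at X)"
    and V_eq: "\<And>X. let N\<^sub>0 = (\<lambda>Y. Nd 0 ((r0 Y)^2));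
                        N\<^sub>p = (\<lambda>Y. Nd 1 ((r0 Y)^2) * (r0 Y)^2);
                        F = (\<lambda>Y. N\<^sub>0 Y + N\<^sub>p Y);
                        f = (\<lambda>Y. 2 * c * N\<^sub>p Y)
                    in V2 X = (complex_of_real ((F X)^2 - deriv F X)
                               + \<Lambda> * (\<Lambda> - complex_of_real (f X))) * V X"
  shows "\<forall>X. V X = 0"
proof (rule ccontr)
  assume "\<not> (\<forall>X. V X = 0)"
  then obtain X0 where X0: "V X0 \<noteq> 0" by blast
  define F where "F = (\<lambda>Y. Nd 0 ((r0 Y)^2) + Nd 1 ((r0 Y)^2) * (r0 Y)^2)"
  define f where "f = (\<lambda>Y. 2 * c * (Nd 1 ((r0 Y)^2) * (r0 Y)^2))"
  have Veq: "V2 X = (complex_of_real ((F X)^2 - deriv F X)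
                + \<Lambda> * (\<Lambda> - complex_of_real (f X))) * V X" for X
    using V_eq[of X] unfolding F_def f_def Let_def .
  have chainN: "((\<lambda>Y. Nd k ((r0 Y)^2)) has_real_derivative
        Nd (Suc k) ((r0 X)^2) * (2 * r0 X * (r0 X * Nd 0 ((r0 X)^2)))) (at X)" for k X
  proof -
    have sq: "((\<lambda>Y. (r0 Y)^2) has_real_derivative 2 * r0 X * (r0 X * Nd 0 ((r0 X)^2))) (at X)"
      using DERIV_mult[OF r0_ode[of X] r0_ode[of X]] by (simp add: power2_eq_square algebra_simps)
    have "(Nd k has_real_derivative Nd (Suc k) ((r0 X)^2)) (at ((r0 X)^2) within range (\<lambda>Y. (r0 Y)^2))"
      by (rule has_field_derivative_subset[OF smooth]) auto
    from DERIV_image_chain[OF this sq] show ?thesis by (simp add: o_def)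
  qed
  have sq: "((\<lambda>Y. (r0 Y)^2) has_real_derivative 2 * r0 X * (r0 X * Nd 0 ((r0 X)^2))) (at X)" for X
      using DERIV_mult[OF r0_ode[of X] r0_ode[of X]] by (simp add: power2_eq_square algebra_simps)
  have "\<exists>D. (F has_real_derivative D) (at X)" for X
    unfolding F_def by (rule exI, rule DERIV_add[OF chainN DERIV_mult[OF chainN sq]])
  then obtain F' where F': "\<And>X. (F has_real_derivative F' X) (at X)" by metis
  have dF: "deriv F X = F' X" for X using F' DERIV_imp_deriv by blast
  have fle: "f X \<le> 0" for X
  proof -
    have "Nd 1 ((r0 X)^2) * (r0 X)^2 \<le> 0"
    proof (cases "(r0 X)^2 > 0")
      case True then show ?thesis using N_dec[OF True] by (simp add: mult_nonpos_nonneg)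
    next
      case False then have "(r0 X)^2 = 0" by (simp add: not_less)
      then show ?thesis by simp
    qed
    then show ?thesis unfolding f_def using c by (simp add: mult_nonneg_nonpos)
  qed
  define W where "W = (\<lambda>X. V1 X + complex_of_real (F X) * V X)"
  have W_d: "(W has_vector_derivative (complex_of_real (F X) * W X + \<Lambda> * (\<Lambda> - complex_of_real (f X)) * V X)) (at X)" for X
  proof -
    have "(W has_vector_derivative (V2 X + (complex_of_real (F X) * V1 X + complex_of_real (F' X) * V X))) (at X)"
      unfolding W_def
      by (intro has_vector_derivative_add V_d2 has_vector_derivative_mult V_d1 has_vector_derivative_of_real F')
    moreover have "V2 X + (complex_of_real (F X) * V1 X + complex_of_real (F' X) * V X)
       = complex_of_real (F X) * W X + \<Lambda> * (\<Lambda> - complex_of_real (f X)) * V X"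
      unfolding Veq dF W_def by (simp add: algebra_simps power2_eq_square)
    ultimately show ?thesis by simp
  qed
  define g where "g = (\<lambda>X. Re (cnj \<Lambda> * (cnj (V X) * W X)))"
  define g' where "g' = (\<lambda>X. Re \<Lambda> * (cmod (W X))^2 + (cmod \<Lambda>)^2 * (Re \<Lambda> - f X) * (cmod (V X))^2)"
  have g_d: "(g has_real_derivative g' X) (at X)" for X
  proof -
    have "((\<lambda>X. cnj \<Lambda> * (cnj (V X) * W X)) has_vector_derivative
        cnj \<Lambda> * (cnj (V X) * (complex_of_real (F X) * W X + \<Lambda> * (\<Lambda> - complex_of_real (f X)) * V X) + cnj (V1 X) * W X)) (at X)"
      by (intro has_vector_derivative_mult_right has_vector_derivative_mult has_vector_derivative_cnj V_d1 W_d)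
    from bounded_linear.has_vector_derivative[OF bounded_linear_Re this]
    have "(g has_vector_derivative g' X) (at X)"
      unfolding g_def g'_def using key_alg[of "W X" "V1 X" "F X" "V X" \<Lambda> "f X"]
      by (simp add: W_def)
    then show ?thesis by (simp add: has_real_derivative_iff_has_vector_derivative)
  qed
  have Lpos: "cmod \<Lambda> > 0" using Lam by (metis norm_zero zero_complex.simps(1) zero_less_norm_iff less_irrefl)
  have g'1: "g' X \<ge> Re \<Lambda> * (cmod (W X))^2" for X
    using fle[of X] Lam unfolding g'_def by (simp add: mult_nonneg_nonneg)
  have g'2: "g' X \<ge> (cmod \<Lambda>)^2 * Re \<Lambda> * (cmod (V X))^2" for X
  proof -
    have "(cmod \<Lambda>)^2 * Re \<Lambda> * (cmod (V X))^2 \<le> (cmod \<Lambda>)^2 * (Re \<Lambda> - f X) * (cmod (V X))^2"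
      using fle[of X] by (intro mult_right_mono mult_left_mono) auto
    moreover have "0 \<le> Re \<Lambda> * (cmod (W X))^2" using Lam by simp
    ultimately show ?thesis unfolding g'_def by linarith
  qed
  have gp: "g' X \<ge> 0" for X using g'1[of X] Lam by (smt (verit) zero_le_power2 mult_nonneg_nonneg)
  define C where "C = (cmod \<Lambda>)^2 / Re \<Lambda>"
  have C: "C > 0" unfolding C_def using Lpos Lam by simp
  have bd: "(g X)^2 \<le> C * (norm (V X))^2 * g' X" for X
  proof -
    have "(g X)^2 \<le> (cmod \<Lambda>)^2 * (cmod (V X))^2 * (cmod (W X))^2"
      unfolding g_def by (rule Re_bound)
    also have "\<dots> \<le> (cmod \<Lambda>)^2 * (cmod (V X))^2 * (g' X / Re \<Lambda>)"
      using g'1[of X] Lam by (intro mult_left_mono) (auto simp: field_simps)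
    also have "\<dots> = C * (norm (V X))^2 * g' X" unfolding C_def by simp
    finally show ?thesis .
  qed
  have cont: "continuous_on UNIV (\<lambda>X. (norm (V X))^2)"
  proof -
    have "continuous_on UNIV V"
      by (rule continuous_on_vector_derivative) (use V_d1 has_vector_derivative_at_within in blast)
    then show ?thesis by (intro continuous_intros)
  qed
  have B: "integral {a..b} (\<lambda>X. (norm (V X))^2) \<le> integral\<^sup>L lborel (\<lambda>X. (norm (V X))^2)" for a b
    by (rule L2_bound[OF V_L2])
  have g'X0: "g' X0 > 0"
  proof -
    have "(cmod \<Lambda>)^2 * Re \<Lambda> * (cmod (V X0))^2 > 0" using Lpos Lam X0 by simp
    then show ?thesis using g'2[of X0] by linarith
  qed
  have right: False if "g t1 > 0" for t1
    by (rule abstract_right[OF g_d gp bd C cont B that])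
  have left: False if "g t1 < 0" for t1
    by (rule abstract_left[OF g_d gp bd C cont B that])
  show False
  proof (cases "g X0 = 0")
    case True
    obtain d where "d > 0" "\<forall>h>0. h < d \<longrightarrow> g X0 < g (X0 + h)"
      using DERIV_pos_inc_right[OF g_d g'X0] by blast
    then have "g (X0 + d/2) > 0" using True by simp
    then show False by (rule right)
  next
    case False
    then have "g X0 > 0 \<or> g X0 < 0" by linarith
    then show False using left right by blast
  qed
qed

end
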